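(* Suppose Assumption A holds with constant $d$, and let $r>0$. Then there exists $\epsilon_o\in(0,1)$ (depending only on $\mathfrak a$ and $\lambda$) such that for all $\epsilon\in(0,\epsilon_o)$, $$\sup_{\theta^\circ\in\Theta^r_{\mathfrak a}}\mathbb E_{\theta^\circ}\|\hat\theta^{m^*_\epsilon}-\theta^\circ\|^2\le(2+r/d^2)(1\vee r)\,\Phi^*_\epsilon .$$
   Context: Let $\ell^2$ be the space of square-summable real sequences with norm $\|\cdot\|$. Fix a bounded real sequence $\lambda=(\lambda_j)_{j\ge1}$ with $\lambda_j\ne0$ for all $j$ and a noise level $\epsilon\in(0,1)$. For a parameter $\theta^\circ$ the data $Y=(Y_j)_{j\ge1}$ satisfy $Y_j=\lambda_j\theta^\circ_j+\sqrt\epsilon\,\xi_j$ with $\xi_j$ i.i.d. $N(0,1)$; $\mathbb E_{\theta^\circ}$ denotes expectation under this law. Fix prior means $\eta=(\eta_j)_{j\ge1}$ and prior variances $\tau_j\in(0,\infty)$ (possibly depending on $\epsilon$). For $m\in\mathbb N$ the sieve prior is the law of $\vartheta^m$ with independent coordinates, $\vartheta^m_j\sim N(\eta_j,\tau_j)$ for $j\le m$ and $\vartheta^m_j=\eta_j$ a.s. for $j>m$, in the model $Y_j=\lambda_j\vartheta^m_j+\sqrt\epsilon\xi_j$. Put $\sigma_j:=(\lambda_j^2\epsilon^{-1}+\tau_j^{-1})^{-1}$ and $\theta^Y_j:=\sigma_j(\tau_j^{-1}\eta_j+\lambda_j\epsilon^{-1}Y_j)$. The Bayes estimator is $\hat\theta^m:=\mathbb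 E[\vartheta^m|Y]$, i.e. $\hat\theta^m_j=\theta^Y_j$ for $j\le m$, $\hat\theta^m_j=\eta_j$ for $j>m$. Let $\Lambda_j:=\lambda_j^{-2}$, $\Lambda_{(m)}:=\max_{1\le j\le m}\Lambda_j$, $\bar\Lambda_m:=m^{-1}\sum_{j=1}^m\Lambda_j$. Let $G_\epsilon:=\max\{1\le m\le\lfloor\epsilon^{-1}\rfloor:\epsilon\Lambda_{(m)}\le\Lambda_1\}$. Assumption A: there is a constant $d>0$ such that $\tau_j\ge d\,(\epsilon^{1/2}\Lambda_j^{1/2}\vee\epsilon\Lambda_j)$ for all $1\le j\le G_\epsilon$ and all $\epsilon\in(0,1)$. Let $\mathfrak a=(\mathfrak a_j)_{j\ge1}$ be strictly positive, non-increasing, with $\mathfrak a_1=1$ and $\mathfrak a_j\to0$. For $r>0$ the ellipsoid is $\Theta^r_{\mathfrak a}:=\{\theta:\sum_{j\ge1}(\theta_j-\eta_j)^2/\mathfrak a_j\le r\}$. Minimax quantities: $m^*_\epsilon:=\min\{m\ge1:\mathfrak a_m\vee\epsilon m\bar\Lambda_m\le\mathfrak a_k\vee\epsilon k\bar\Lambda_k\text{ for all }k\ge1\}$ and $\Phi^*_\epsilon:=\mathfrak a_{m^*_\epsilon}\vee\epsilon m^*_\epsilon\bar\Lambda_{m^*_\epsilon}$. *)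

theory Defs
  imports "HOL-Probability.Probability"
begin

text \<open>Sequences are functions nat => real; only indices j >= 1 are used (index 0 is ignored).\<close>

definition std_gauss :: "real measure" where
  "std_gauss = density lborel (\<lambda>x. ennreal (std_normal_density x))"

definition noise_law :: "(nat \<Rightarrow> real) measure" where
  "noise_law = (\<Pi>\<^sub>M j\<in>(UNIV::nat set). std_gauss)"

definition Lam :: "(nat \<Rightarrow> real) \<Rightarrow> nat \<Rightarrow> real" where
  "Lam lam j = 1 / (lam j)\<^sup>2"

definition LamMax :: "(nat \<Rightarrow> real) \<Rightarrow> nat \<Rightarrow> real" where
  "LamMax lam m = Max ((Lam lam) ` {1..m})"

definition LamBar :: "(nat \<Rightarrow> real) \<Rightarrow> nat \<Rightarrow> real" where
  "LamBar lam m = (\<Sum>j=1..m. Lam lam j) / real m"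

definition Geps :: "(nat \<Rightarrow> real) \<Rightarrow> real \<Rightarrow> nat" where
  "Geps lam eps = Max {m. 1 \<le> m \<and> m \<le> nat \<lfloor>1 / eps\<rfloor> \<and> eps * LamMax lam m \<le> Lam lam 1}"

definition mstar :: "(nat \<Rightarrow> real) \<Rightarrow> (nat \<Rightarrow> real) \<Rightarrow> real \<Rightarrow> nat" where
  "mstar a lam eps = (LEAST m. 1 \<le> m \<and>
     (\<forall>k\<ge>1. max (a m) (eps * real m * LamBar lam m) \<le> max (a k) (eps * real k * LamBar lam k)))"

definition Phistar :: "(nat \<Rightarrow> real) \<Rightarrow> (nat \<Rightarrow> real) \<Rightarrow> real \<Rightarrow> real" where
  "Phistar a lam eps = max (a (mstar a lam eps)) (eps * real (mstar a lam eps) * LamBar lam (mstar a lam eps))"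

definition sig :: "(nat \<Rightarrow> real) \<Rightarrow> real \<Rightarrow> (nat \<Rightarrow> real) \<Rightarrow> nat \<Rightarrow> real" where
  "sig lam eps tau j = 1 / ((lam j)\<^sup>2 / eps + 1 / tau j)"

definition thetaY :: "(nat \<Rightarrow> real) \<Rightarrow> real \<Rightarrow> (nat \<Rightarrow> real) \<Rightarrow> (nat \<Rightarrow> real) \<Rightarrow> (nat \<Rightarrow> real) \<Rightarrow> nat \<Rightarrow> real" where
  "thetaY lam eps tau eta Y j = sig lam eps tau j * (eta j / tau j + lam j * Y j / eps)"

text \<open>Bayes estimator of the sieve prior with dimension m.\<close>
definition bayes_est :: "nat \<Rightarrow> (nat \<Rightarrow> real) \<Rightarrow> real \<Rightarrow> (nat \<Rightarrow> real) \<Rightarrow> (nat \<Rightarrow> real) \<Rightarrow> (nat \<Rightarrow> real) \<Rightarrow> nat \<Rightarrow> real" where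
  "bayes_est m lam eps tau eta Y j = (if j \<le> m then thetaY lam eps tau eta Y j else eta j)"

definition obs :: "(nat \<Rightarrow> real) \<Rightarrow> real \<Rightarrow> (nat \<Rightarrow> real) \<Rightarrow> (nat \<Rightarrow> real) \<Rightarrow> nat \<Rightarrow> real" where
  "obs lam eps theta xi j = lam j * theta j + sqrt eps * xi j"

definition risk :: "nat \<Rightarrow> (nat \<Rightarrow> real) \<Rightarrow> real \<Rightarrow> (nat \<Rightarrow> real) \<Rightarrow> (nat \<Rightarrow> real) \<Rightarrow> (nat \<Rightarrow> real) \<Rightarrow> ennreal" where
  "risk m lam eps tau eta theta = (\<integral>\<^sup>+ xi. (\<Sum>j. ennreal
      ((bayes_est m lam eps tau eta (obs lam eps theta xi) (Suc j) - theta (Suc j))\<^sup>2)) \<partial>noise_law)"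

definition ellipsoid :: "(nat \<Rightarrow> real) \<Rightarrow> (nat \<Rightarrow> real) \<Rightarrow> real \<Rightarrow> (nat \<Rightarrow> real) set" where
  "ellipsoid a eta r = {theta. summable (\<lambda>j. (theta (Suc j))\<^sup>2) \<and>
      (\<Sum>j. ennreal ((theta (Suc j) - eta (Suc j))\<^sup>2 / a (Suc j))) \<le> ennreal r}"

end

theory Submission imports Defs begin



lemma prob_std_gauss: "prob_space std_gauss"
  unfolding std_gauss_def by (rule prob_space_normal_density) simp

lemma comp_meas[measurable]: "(\<lambda>x. x i) \<in> borel_measurable noise_law"
proof -
  have "(\<lambda>x. x i) \<in> measurable noise_law std_gauss"
    unfolding noise_law_def by (rule measurable_component_singleton) simp
  moreover have "sets std_gauss = sets borel" unfolding std_gauss_def by simp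
  ultimately show ?thesis using measurable_cong_sets[OF refl, of std_gauss borel noise_law] by simp
qed

lemma gauss_sq:
  fixes c s :: real
  shows "(\<integral>\<^sup>+ x. ennreal ((c + s * x)\<^sup>2) \<partial>std_gauss) = ennreal (c\<^sup>2 + s\<^sup>2)"
proof -
  have int: "integrable lborel (\<lambda>x. std_normal_density x * (c + s * x)\<^sup>2)"
  proof -
    have e: "(\<lambda>x. std_normal_density x * (c + s * x)\<^sup>2) = (\<lambda>x. c\<^sup>2 * (std_normal_density x * x^(2*0)) + (2 * c * s) * (std_normal_density x * x^(2*0+1)) + s\<^sup>2 * (std_normal_density x * x^(2*1)))"
      by (auto simp: power2_eq_square algebra_simps)
    show ?thesis unfolding e
      by (intro Bochner_Integration.integrable_add Bochner_Integration.integrable_mult_right integrable_std_normal_moment)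
  qed
  have "(\<integral>x. std_normal_density x * (c + s * x)\<^sup>2 \<partial>lborel) = c\<^sup>2 + s\<^sup>2"
  proof -
    have e: "(\<lambda>x. std_normal_density x * (c + s * x)\<^sup>2) = (\<lambda>x. c\<^sup>2 * (std_normal_density x * x^(2*0)) + (2 * c * s) * (std_normal_density x * x^(2*0+1)) + s\<^sup>2 * (std_normal_density x * x^(2*1)))"
      by (auto simp: power2_eq_square algebra_simps)
    have i: "\<And>k. integrable lborel (\<lambda>x. std_normal_density x * x^k)" by (rule integrable_std_normal_moment)
    show ?thesis unfolding e
      apply (subst Bochner_Integration.integral_add, (intro Bochner_Integration.integrable_add Bochner_Integration.integrable_mult_right i)+)
      apply (subst Bochner_Integration.integral_add, (intro Bochner_Integration.integrable_add Bochner_Integration.integrable_mult_right i)+)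
      apply (simp only: integral_mult_right_zero integral_std_normal_moment_even integral_std_normal_moment_odd)
      by simp
  qed
  moreover have "(\<integral>\<^sup>+ x. ennreal ((c + s * x)\<^sup>2) \<partial>std_gauss) = (\<integral>\<^sup>+ x. ennreal (std_normal_density x * (c + s * x)\<^sup>2) \<partial>lborel)"
    unfolding std_gauss_def
    by (subst nn_integral_density) (auto simp: ennreal_mult normal_density_nonneg)
  moreover have "(\<integral>\<^sup>+ x. ennreal (std_normal_density x * (c + s * x)\<^sup>2) \<partial>lborel) = ennreal (\<integral>x. std_normal_density x * (c + s * x)\<^sup>2 \<partial>lborel)"
    by (rule nn_integral_eq_integral[OF int]) (auto simp: normal_density_nonneg)
  ultimately show ?thesis by simp
qed

lemma noise_comp:
  assumes f: "f \<in> borel_measurable borel"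
  shows "(\<integral>\<^sup>+ xi. f (xi j) \<partial>noise_law) = (\<integral>\<^sup>+ x. f x \<partial>std_gauss)"
proof -
  have d: "distr noise_law std_gauss (\<lambda>\<omega>. \<omega> j) = std_gauss"
    unfolding noise_law_def by (rule distr_PiM_component) (auto simp: prob_std_gauss)
  have m: "(\<lambda>\<omega>. \<omega> j) \<in> measurable noise_law std_gauss"
    unfolding noise_law_def by (rule measurable_component_singleton) simp
  have fm: "f \<in> borel_measurable std_gauss" using f unfolding std_gauss_def by simp
  have "(\<integral>\<^sup>+ x. f x \<partial>std_gauss) = (\<integral>\<^sup>+ x. f x \<partial>distr noise_law std_gauss (\<lambda>\<omega>. \<omega> j))" using d by simp
  also have "\<dots> = (\<integral>\<^sup>+ xi. f (xi j) \<partial>noise_law)" by (rule nn_integral_distr[OF m]) (simp add: d fm)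
  finally show ?thesis by simp
qed


lemma err_decomp:
  assumes eps: "eps > 0" and t: "t > 0" and l: "l \<noteq> 0"
  defines "sg \<equiv> 1 / (l\<^sup>2 / eps + 1 / t)"
  shows "sg * (e / t + l * (l * th + sqrt eps * x) / eps) - th = sg * (e - th) / t + (sg * l / sqrt eps) * x"
proof -
  have p: "l\<^sup>2 / eps + 1 / t > 0" using eps t l by (simp add: add_pos_pos)
  have s1: "sg * (l\<^sup>2 / eps + 1 / t) = 1" unfolding sg_def using p by simp
  have s2: "sqrt eps / eps = 1 / sqrt eps"
  proof -
    have "sqrt eps * sqrt eps = eps" using eps by simp
    thus ?thesis using eps by (metis divide_divide_eq_right div_by_1 real_sqrt_gt_zero less_irrefl nonzero_mult_div_cancel_left)
  qed
  have s3: "th = sg * (l\<^sup>2 / eps) * th + sg * (1 / t) * th" using s1 by (metis distrib_left distrib_right mult_1)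
  have "sg * (e / t + l * (l * th + sqrt eps * x) / eps) = sg * (e / t) + sg * (l\<^sup>2 / eps) * th + sg * l * x * (sqrt eps / eps)"
    by (simp add: algebra_simps power2_eq_square add_divide_distrib)
  also have "\<dots> = sg * (e / t) + sg * (l\<^sup>2 / eps) * th + (sg * l / sqrt eps) * x"
    unfolding s2 by simp
  finally have "sg * (e / t + l * (l * th + sqrt eps * x) / eps) - th = sg * (e / t) - sg * (1 / t) * th + (sg * l / sqrt eps) * x"
    using s3 by linarith
  then show ?thesis by (simp add: algebra_simps diff_divide_distrib)
qed
definition err2 :: "nat \<Rightarrow> (nat \<Rightarrow> real) \<Rightarrow> real \<Rightarrow> (nat \<Rightarrow> real) \<Rightarrow> (nat \<Rightarrow> real) \<Rightarrow> (nat \<Rightarrow> real) \<Rightarrow> nat \<Rightarrow> real" where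
  "err2 m lam eps tau eta theta i = (if i \<le> m then (sig lam eps tau i * (eta i - theta i) / tau i)\<^sup>2
       + (sig lam eps tau i * lam i / sqrt eps)\<^sup>2 else (eta i - theta i)\<^sup>2)"

lemma risk_eq:
  assumes eps: "eps > 0" and tau: "\<forall>i\<ge>1. tau i > 0" and lam: "\<forall>i\<ge>1. lam i \<noteq> 0"
  shows "risk m lam eps tau eta theta = (\<Sum>j. ennreal (err2 m lam eps tau eta theta (Suc j)))"
proof -
  define c where "c i = (if i \<le> m then sig lam eps tau i * (eta i - theta i) / tau i else eta i - theta i)" for i
  define s where "s i = (if i \<le> m then sig lam eps tau i * lam i / sqrt eps else 0)" for i
  have pt: "(bayes_est m lam eps tau eta (obs lam eps theta xi) (Suc j) - theta (Suc j)) = c (Suc j) + s (Suc j) * xi (Suc j)" for xi j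
  proof (cases "Suc j \<le> m")
    case True
    have 1: "c (Suc j) + s (Suc j) * xi (Suc j) = sig lam eps tau (Suc j) * (eta (Suc j) - theta (Suc j)) / tau (Suc j) + (sig lam eps tau (Suc j) * lam (Suc j) / sqrt eps) * xi (Suc j)"
      using True by (simp add: c_def s_def)
    have 2: "bayes_est m lam eps tau eta (obs lam eps theta xi) (Suc j) - theta (Suc j) = sig lam eps tau (Suc j) * (eta (Suc j) / tau (Suc j) + lam (Suc j) * (lam (Suc j) * theta (Suc j) + sqrt eps * xi (Suc j)) / eps) - theta (Suc j)"
      using True by (simp add: bayes_est_def thetaY_def obs_def)
    have 3: "sig lam eps tau (Suc j) * (eta (Suc j) / tau (Suc j) + lam (Suc j) * (lam (Suc j) * theta (Suc j) + sqrt eps * xi (Suc j)) / eps) - theta (Suc j) = sig lam eps tau (Suc j) * (eta (Suc j) - theta (Suc j)) / tau (Suc j) + (sig lam eps tau (Suc j) * lam (Suc j) / sqrt eps) * xi (Suc j)"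
      unfolding sig_def by (rule err_decomp) (use eps tau lam in auto)
    show ?thesis using 1 2 3 by simp
  next
    case False
    then show ?thesis by (simp add: c_def s_def bayes_est_def)
  qed
  have "risk m lam eps tau eta theta = (\<integral>\<^sup>+ xi. (\<Sum>j. ennreal ((c (Suc j) + s (Suc j) * xi (Suc j))\<^sup>2)) \<partial>noise_law)"
    unfolding risk_def pt ..
  also have "\<dots> = (\<Sum>j. \<integral>\<^sup>+ xi. ennreal ((c (Suc j) + s (Suc j) * xi (Suc j))\<^sup>2) \<partial>noise_law)"
    apply (rule nn_integral_suminf)
    by measurable
  also have "\<dots> = (\<Sum>j. ennreal ((c (Suc j))\<^sup>2 + (s (Suc j))\<^sup>2))"
    apply (rule suminf_cong)
    subgoal for j
      using noise_comp[of "\<lambda>x. ennreal ((c (Suc j) + s (Suc j) * x)\<^sup>2)" "Suc j"] gauss_sq[of "c (Suc j)" "s (Suc j)"]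
      by simp
    done
  also have "\<dots> = (\<Sum>j. ennreal (err2 m lam eps tau eta theta (Suc j)))"
    by (intro suminf_cong arg_cong[where f=ennreal]) (simp add: c_def s_def err2_def)
  finally show ?thesis .
qed




lemma sig_le:
  assumes eps: "eps > 0" and t: "tau i > 0" and l: "lam i \<noteq> 0"
  shows "sig lam eps tau i > 0" "sig lam eps tau i \<le> eps * Lam lam i"
proof -
  have l2: "(lam i)\<^sup>2 > 0" using l by simp
  have p: "(lam i)\<^sup>2 / eps + 1 / tau i > 0" using eps t l2 by (simp add: add_pos_pos)
  show "sig lam eps tau i > 0" unfolding sig_def using p by simp
  have "(lam i)\<^sup>2 / eps \<le> (lam i)\<^sup>2 / eps + 1 / tau i" using t by simp
  hence "1 / ((lam i)\<^sup>2 / eps + 1 / tau i) \<le> 1 / ((lam i)\<^sup>2 / eps)"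
    by (intro divide_left_mono) (use p eps l2 in \<open>auto intro!: divide_pos_pos mult_pos_pos\<close>)
  also have "\<dots> = eps * Lam lam i" unfolding Lam_def using eps l2 by simp
  finally show "sig lam eps tau i \<le> eps * Lam lam i" unfolding sig_def .
qed

lemma term_bound:
  assumes eps: "eps > 0" and d: "d > 0" and t: "tau i > 0" and l: "lam i \<noteq> 0"
    and ai: "a i > 0" "a i \<le> 1"
    and tb: "i \<le> m \<Longrightarrow> tau i \<ge> d * sqrt eps * sqrt (Lam lam i)"
    and LM: "i \<le> m \<Longrightarrow> Lam lam i \<le> LM"
    and am: "\<not> i \<le> m \<Longrightarrow> a i \<le> a m"
  shows "err2 m lam eps tau eta theta i \<le> max (eps * LM / d\<^sup>2) (a m) * ((theta i - eta i)\<^sup>2 / a i)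
           + (if i \<le> m then eps * Lam lam i else 0)"
proof -
  define C where "C = max (eps * LM / d\<^sup>2) (a m)"
  define D where "D = (theta i - eta i)\<^sup>2 / a i"
  have eD: "(eta i - theta i)\<^sup>2 = a i * D" unfolding D_def using ai by (simp add: power2_commute)
  have D0: "D \<ge> 0" unfolding D_def using ai by simp
  have eD2: "(eta i - theta i)\<^sup>2 \<le> D" unfolding eD using ai D0 by (simp add: mult_left_le_one_le)
  show ?thesis
  proof (cases "i \<le> m")
    case True
    define sg where "sg = sig lam eps tau i"
    define L where "L = Lam lam i"
    have l2: "(lam i)\<^sup>2 > 0" using l by simp
    have L0: "L > 0" unfolding L_def Lam_def using l2 by simp
    have Ll: "L * (lam i)\<^sup>2 = 1" unfolding L_def Lam_def using l2 by simp
    have sg0: "sg > 0" and sgl: "sg \<le> eps * L" unfolding sg_def L_def using sig_le[where eps=eps and tau=tau and i=i and lam=lam] eps t l by auto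
    have tb': "tau i \<ge> d * sqrt eps * sqrt L" using tb True unfolding L_def by simp
    have tau2: "(tau i)\<^sup>2 \<ge> d\<^sup>2 * eps * L"
    proof -
      have "0 \<le> d * sqrt eps * sqrt L" using d eps L0 by simp
      hence "(d * sqrt eps * sqrt L)\<^sup>2 \<le> (tau i)\<^sup>2" using tb' by (intro power_mono) auto
      thus ?thesis using eps L0 by (simp add: power_mult_distrib)
    qed
    have q1: "(sg / tau i)\<^sup>2 \<le> eps * L / d\<^sup>2"
    proof -
      have "(sg / tau i)\<^sup>2 = sg\<^sup>2 / (tau i)\<^sup>2" by (simp add: power_divide)
      also have "\<dots> \<le> (eps * L)\<^sup>2 / (tau i)\<^sup>2"
        using sg0 sgl by (intro divide_right_mono power_mono) auto
      also have "\<dots> \<le> (eps * L)\<^sup>2 / (d\<^sup>2 * eps * L)"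
        using tau2 d eps L0 t by (intro divide_left_mono) (auto intro!: mult_pos_pos)
      also have "\<dots> = eps * L / d\<^sup>2" using eps L0 d by (simp add: power2_eq_square field_simps)
      finally show ?thesis .
    qed
    have q1': "eps * L / d\<^sup>2 \<le> C" unfolding C_def using LM True eps d unfolding L_def
      by (intro max.coboundedI1 divide_right_mono mult_left_mono) auto
    have t1: "(sg * (eta i - theta i) / tau i)\<^sup>2 \<le> C * D"
    proof -
      have "(sg * (eta i - theta i) / tau i)\<^sup>2 = (sg / tau i)\<^sup>2 * (eta i - theta i)\<^sup>2"
        by (simp add: power_mult_distrib power_divide)
      also have "\<dots> \<le> C * D" using q1 q1' eD2 eps L0 d by (intro mult_mono) (auto intro: order_trans[rotated])
      finally show ?thesis .
    qed
    have t2: "(sg * lam i / sqrt eps)\<^sup>2 \<le> eps * L"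
    proof -
      have "(sg * lam i / sqrt eps)\<^sup>2 = sg\<^sup>2 * (lam i)\<^sup>2 / eps" using eps by (simp add: power_mult_distrib power_divide)
      also have "\<dots> \<le> (eps * L)\<^sup>2 * (lam i)\<^sup>2 / eps"
        using sg0 sgl eps l2 by (intro divide_right_mono mult_right_mono power_mono) auto
      also have "\<dots> = eps * L * (L * (lam i)\<^sup>2)" using eps by (simp add: power2_eq_square)
      also have "\<dots> = eps * L" using Ll by simp
      finally show ?thesis .
    qed
    show ?thesis using t1 t2 True unfolding err2_def C_def[symmetric] D_def[symmetric] sg_def[symmetric] L_def[symmetric]
      by simp
  next
    case False
    have "(eta i - theta i)\<^sup>2 \<le> C * D" unfolding eD C_def using am[OF False] D0
      by (intro mult_right_mono) auto
    then show ?thesis using False unfolding err2_def C_def[symmetric] D_def[symmetric] by simp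
  qed
qed



lemma final_ineq:
  fixes P r d :: real
  assumes "P \<ge> 0" "r > 0" "d > 0"
  shows "P * (r / d\<^sup>2 + r + 1) \<le> (2 + r / d\<^sup>2) * max 1 r * P"
proof -
  have "r / d\<^sup>2 + r + 1 \<le> (2 + r / d\<^sup>2) * max 1 r"
  proof (cases "r \<le> 1")
    case True
    then show ?thesis using assms by (simp add: max_def)
  next
    case False
    have rd: "r / d\<^sup>2 \<ge> 0" using assms by simp
    have "r / d\<^sup>2 * 1 \<le> r / d\<^sup>2 * r" using False rd by (intro mult_left_mono) auto
    then show ?thesis using False by (simp add: max_def algebra_simps)
  qed
  then show ?thesis using assms(1) by (metis mult.commute mult_left_mono)
qed

theorem mainTheorem9:
  fixes lam a :: "nat \<Rightarrow> real"
  assumes lam_bdd: "\<exists>B. \<forall>j\<ge>1. \<bar>lam j\<bar> \<le> B"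
    and lam_nz: "\<forall>j\<ge>1. lam j \<noteq> 0"
    and a_pos: "\<forall>j\<ge>1. a j > 0"
    and a_mono: "\<forall>j k. 1 \<le> j \<longrightarrow> j \<le> k \<longrightarrow> a k \<le> a j"
    and a_one: "a 1 = 1"
    and a_lim: "a \<longlonglongrightarrow> 0"
  shows "\<exists>eo. 0 < eo \<and> eo < 1 \<and>
    (\<forall>(d::real) (r::real) (eta::nat \<Rightarrow> real) (tau::real \<Rightarrow> nat \<Rightarrow> real).
       d > 0 \<longrightarrow> r > 0 \<longrightarrow>
       (\<forall>eps. 0 < eps \<and> eps < 1 \<longrightarrow> (\<forall>j\<ge>1. tau eps j > 0)) \<longrightarrow>
       (\<forall>eps. 0 < eps \<and> eps < 1 \<longrightarrow> (\<forall>j. 1 \<le> j \<and> j \<le> Geps lam eps \<longrightarrow>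
           tau eps j \<ge> d * max (sqrt eps * sqrt (Lam lam j)) (eps * Lam lam j))) \<longrightarrow>
       (\<forall>eps. 0 < eps \<and> eps < eo \<longrightarrow>
          (\<forall>theta \<in> ellipsoid a eta r.
             risk (mstar a lam eps) lam eps (tau eps) eta theta
               \<le> ennreal ((2 + r / d\<^sup>2) * max 1 r * Phistar a lam eps))))"
proof -
  obtain B where B: "\<forall>j\<ge>1. \<bar>lam j\<bar> \<le> B" using lam_bdd by blast
  have Bpos: "B > 0" using B lam_nz by (metis abs_le_zero_iff le_less_trans less_le_not_le linorder_not_less order_refl zero_less_abs_iff)
  define L0 where "L0 = 1 / B\<^sup>2"
  have L0pos: "L0 > 0" unfolding L0_def using Bpos by simp
  have Lampos: "Lam lam j > 0" if "j \<ge> 1" for j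
    using lam_nz that unfolding Lam_def by simp
  have LamL0: "Lam lam j \<ge> L0" if "j \<ge> 1" for j
  proof -
    have "(lam j)\<^sup>2 \<le> B\<^sup>2" using B that by (metis abs_le_square_iff abs_of_pos Bpos)
    moreover have "(lam j)\<^sup>2 > 0" using lam_nz that by simp
    ultimately show ?thesis unfolding L0_def Lam_def by (intro divide_left_mono) (auto intro!: mult_pos_pos)
  qed
  have sumLam: "(\<Sum>j=1..m. Lam lam j) \<ge> real m * L0" for m
  proof -
    have "(\<Sum>j=1..m. L0) \<le> (\<Sum>j=1..m. Lam lam j)" by (intro sum_mono LamL0) auto
    thus ?thesis by simp
  qed
  have LamBar_ge: "LamBar lam m \<ge> L0" if "m \<ge> 1" for m
  proof -
    have "real m * L0 / real m \<le> (\<Sum>j=1..m. Lam lam j) / real m" using sumLam[of m] that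
      by (intro divide_right_mono) auto
    thus ?thesis unfolding LamBar_def using that by simp
  qed
  have "\<forall>\<^sub>F n in sequentially. a n < L0" using a_lim L0pos by (rule order_tendstoD(2))
  then obtain N0 where N0: "\<And>n. n \<ge> N0 \<Longrightarrow> a n < L0" by (auto simp: eventually_sequentially)
  define K where "K = Suc N0"
  have K1: "K \<ge> 1" and aK: "a K \<le> L0" using N0[of K] unfolding K_def by auto
  define Cst where "Cst = real K * LamBar lam K"
  have Cpos: "Cst > 0" unfolding Cst_def using K1 LamBar_ge[OF K1] L0pos by simp
  define eo where "eo = min (1/2) (L0 / Cst)"
  have eo0: "eo > 0" unfolding eo_def using L0pos Cpos by simp
  have eo1: "eo < 1" unfolding eo_def by simp
  show ?thesis
  proof (intro exI[of _ eo] conjI eo0 eo1 allI impI ballI)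
    fix d r :: real and eta :: "nat \<Rightarrow> real" and tau :: "real \<Rightarrow> nat \<Rightarrow> real" and eps :: real and theta
    assume d: "d > 0" and r: "r > 0"
      and tpos: "\<forall>eps. 0 < eps \<and> eps < 1 \<longrightarrow> (\<forall>j\<ge>1. tau eps j > 0)"
      and tA: "\<forall>eps. 0 < eps \<and> eps < 1 \<longrightarrow> (\<forall>j. 1 \<le> j \<and> j \<le> Geps lam eps \<longrightarrow>
           tau eps j \<ge> d * max (sqrt eps * sqrt (Lam lam j)) (eps * Lam lam j))"
      and epsA: "0 < eps \<and> eps < eo" and th: "theta \<in> ellipsoid a eta r"
    have eps0: "eps > 0" and eps1: "eps < 1" and epsC: "eps * Cst < L0"
      using epsA eo1 Cpos unfolding eo_def by (auto simp: field_simps)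
    define f where "f m = max (a m) (eps * real m * LamBar lam m)" for m
    have fge: "f k \<ge> eps * real k * L0" if "k \<ge> 1" for k
    proof -
      have "eps * real k * L0 \<le> eps * real k * LamBar lam k"
        using LamBar_ge[OF that] eps0 by (intro mult_left_mono) auto
      thus ?thesis unfolding f_def by simp
    qed
    define N where "N = nat \<lceil>f 1 / (eps * L0)\<rceil> + 1"
    have N1: "N \<ge> 1" unfolding N_def by simp
    have fbig: "f k > f 1" if "k > N" for k
    proof -
      have "f 1 / (eps * L0) < real k" using that unfolding N_def by linarith
      hence "f 1 < eps * real k * L0" using eps0 L0pos by (simp add: field_simps)
      thus ?thesis using fge[of k] that N1 by linarith
    qed
    have fin: "finite (f ` {1..N})" and ne: "f ` {1..N} \<noteq> {}" using N1 by auto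
    obtain m0 where m0: "m0 \<in> {1..N}" "f m0 = Min (f ` {1..N})"
      using Min_in[OF fin ne] by auto
    have ex: "\<exists>m. 1 \<le> m \<and> (\<forall>k\<ge>1. f m \<le> f k)"
    proof (intro exI conjI allI impI)
      show "1 \<le> m0" using m0 by simp
      fix k :: nat assume k: "1 \<le> k"
      show "f m0 \<le> f k"
      proof (cases "k \<le> N")
        case True thus ?thesis using m0 k fin by auto
      next
        case False
        have "f m0 \<le> f 1" using m0 fin N1 by auto
        thus ?thesis using fbig[of k] False by linarith
      qed
    qed
    define ms where "ms = mstar a lam eps"
    have ms: "1 \<le> ms \<and> (\<forall>k\<ge>1. f ms \<le> f k)"
      unfolding ms_def mstar_def f_def by (rule LeastI_ex) (use ex in \<open>simp add: f_def\<close>)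
    have ms1: "ms \<ge> 1" using ms by simp
    define Phi where "Phi = Phistar a lam eps"
    have PhiF: "Phi = f ms" unfolding Phi_def Phistar_def f_def ms_def ..
    have PhiL0: "Phi \<le> L0"
    proof -
      have "Phi \<le> f K" using ms K1 PhiF by auto
      also have "\<dots> \<le> L0" unfolding f_def using aK epsC unfolding Cst_def by (simp add: mult.assoc)
      finally show ?thesis .
    qed
    have Phi_a: "a ms \<le> Phi" and Phi_v: "eps * real ms * LamBar lam ms \<le> Phi"
      unfolding PhiF f_def by auto
    have Phi0: "Phi \<ge> 0" using Phi_a a_pos ms1 by force
    have msLB: "real ms * LamBar lam ms = (\<Sum>j=1..ms. Lam lam j)" unfolding LamBar_def using ms1 by simp
    have LMle: "LamMax lam ms \<le> real ms * LamBar lam ms"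
      unfolding LamMax_def msLB using ms1
      by (subst Max_le_iff) (auto intro!: member_le_sum less_imp_le[OF Lampos])
    have epsLM: "eps * LamMax lam ms \<le> Phi"
      using LMle eps0 Phi_v by (metis mult.assoc mult_left_mono less_imp_le order_trans)
    have "eps * real ms * L0 \<le> L0"
    proof -
      have "eps * real ms * L0 \<le> eps * real ms * LamBar lam ms"
        using LamBar_ge[OF ms1] eps0 by (intro mult_left_mono) auto
      thus ?thesis using Phi_v PhiL0 by linarith
    qed
    hence "eps * real ms \<le> 1" using L0pos by simp
    hence "real ms \<le> 1 / eps" using eps0 by (simp add: field_simps)
    hence msfl: "ms \<le> nat \<lfloor>1 / eps\<rfloor>" by (rule le_nat_floor)
    have msL1: "eps * LamMax lam ms \<le> Lam lam 1" using epsLM PhiL0 LamL0[of 1] by linarith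
    have msG: "ms \<le> Geps lam eps" unfolding Geps_def
      by (rule Max_ge) (use ms1 msfl msL1 in \<open>auto intro: finite_subset[of _ "{..nat \<lfloor>1/eps\<rfloor>}"]\<close>)
    have tpos': "\<forall>i\<ge>1. tau eps i > 0" using tpos eps0 eps1 by blast
    define C where "C = max (eps * LamMax lam ms / d\<^sup>2) (a ms)"
    define D where "D i = (theta i - eta i)\<^sup>2 / a i" for i
    define e where "e i = (if i \<le> ms then eps * Lam lam i else 0)" for i
    have C0: "C \<ge> 0" unfolding C_def using a_pos ms1 by (simp add: le_max_iff_disj less_imp_le)
    have D0: "D i \<ge> 0" if "i \<ge> 1" for i unfolding D_def using a_pos that by (simp add: less_imp_le)
    have e0: "e i \<ge> 0" if "i \<ge> 1" for i unfolding e_def using Lampos[OF that] eps0 by simp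
    have tb: "err2 ms lam eps (tau eps) eta theta (Suc j) \<le> C * D (Suc j) + e (Suc j)" for j
      unfolding C_def D_def e_def
    proof (rule term_bound[OF eps0 d])
      show "tau eps (Suc j) > 0" using tpos' by simp
      show "lam (Suc j) \<noteq> 0" using lam_nz by simp
      show "a (Suc j) > 0" using a_pos by simp
      show "a (Suc j) \<le> 1" using a_mono a_one by (metis One_nat_def le_add1 plus_1_eq_Suc order_refl)
      assume "Suc j \<le> ms"
      hence "d * max (sqrt eps * sqrt (Lam lam (Suc j))) (eps * Lam lam (Suc j)) \<le> tau eps (Suc j)"
        using tA eps0 eps1 msG by auto
      moreover have "d * (sqrt eps * sqrt (Lam lam (Suc j))) \<le> d * max (sqrt eps * sqrt (Lam lam (Suc j))) (eps * Lam lam (Suc j))"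
        using d by (intro mult_left_mono) auto
      ultimately show "d * sqrt eps * sqrt (Lam lam (Suc j)) \<le> tau eps (Suc j)" by (simp add: mult.assoc)
    next
      assume "Suc j \<le> ms"
      thus "Lam lam (Suc j) \<le> LamMax lam ms" unfolding LamMax_def by (intro Max_ge) auto
    next
      assume "\<not> Suc j \<le> ms"
      thus "a (Suc j) \<le> a ms" using a_mono ms1 by auto
    qed
    have ell: "(\<Sum>j. ennreal (D (Suc j))) \<le> ennreal r"
      using th unfolding ellipsoid_def D_def by (simp add: power2_commute)
    have esum: "(\<Sum>j. ennreal (e (Suc j))) = ennreal (eps * real ms * LamBar lam ms)"
    proof -
      have "(\<Sum>j. ennreal (e (Suc j))) = (\<Sum>j<ms. ennreal (e (Suc j)))"
        by (rule suminf_finite) (auto simp: e_def)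
      also have "\<dots> = ennreal (\<Sum>j<ms. e (Suc j))" using e0 by (intro sum_ennreal) auto
      also have "(\<Sum>j<ms. e (Suc j)) = eps * (\<Sum>j=1..ms. Lam lam j)"
        by (simp add: e_def sum.atLeast1_atMost_eq sum_distrib_left)
      finally show ?thesis using msLB by (simp add: mult.assoc)
    qed
    have "risk ms lam eps (tau eps) eta theta = (\<Sum>j. ennreal (err2 ms lam eps (tau eps) eta theta (Suc j)))"
      using risk_eq[OF eps0 tpos'] lam_nz by simp
    also have "\<dots> \<le> (\<Sum>j. ennreal C * ennreal (D (Suc j)) + ennreal (e (Suc j)))"
    proof (intro suminf_le summableI)
      fix j
      have "ennreal (err2 ms lam eps (tau eps) eta theta (Suc j)) \<le> ennreal (C * D (Suc j) + e (Suc j))"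
        using tb by (rule ennreal_leI)
      also have "\<dots> = ennreal C * ennreal (D (Suc j)) + ennreal (e (Suc j))"
        using C0 D0[of "Suc j"] e0[of "Suc j"] by (simp add: ennreal_plus ennreal_mult)
      finally show "ennreal (err2 ms lam eps (tau eps) eta theta (Suc j)) \<le> ennreal C * ennreal (D (Suc j)) + ennreal (e (Suc j))" .
    qed
    also have "\<dots> = ennreal C * (\<Sum>j. ennreal (D (Suc j))) + (\<Sum>j. ennreal (e (Suc j)))"
      by (subst suminf_add[symmetric]) auto
    also have "\<dots> \<le> ennreal C * ennreal r + ennreal (eps * real ms * LamBar lam ms)"
      using ell esum by (auto intro: add_mono mult_left_mono)
    also have "\<dots> = ennreal (C * r + eps * real ms * LamBar lam ms)"
    proof -
      have v0: "0 \<le> eps * real ms * LamBar lam ms" using LamBar_ge[OF ms1] L0pos eps0 by simp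
      have "ennreal (C * r + eps * real ms * LamBar lam ms) = ennreal (C * r) + ennreal (eps * real ms * LamBar lam ms)"
        using C0 r v0 by (intro ennreal_plus) auto
      also have "ennreal (C * r) = ennreal C * ennreal r" using C0 r by (intro ennreal_mult) auto
      finally show ?thesis by simp
    qed
    also have "\<dots> \<le> ennreal ((2 + r / d\<^sup>2) * max 1 r * Phi)"
    proof (rule ennreal_leI)
      have p1: "eps * LamMax lam ms / d\<^sup>2 \<le> Phi / d\<^sup>2" using epsLM d by (intro divide_right_mono) auto
      have p2: "Phi / d\<^sup>2 \<ge> 0" using Phi0 d by simp
      have "C \<le> Phi / d\<^sup>2 + Phi" unfolding C_def using p1 p2 Phi_a Phi0 by linarith
      hence "C * r \<le> (Phi / d\<^sup>2 + Phi) * r" using r by (intro mult_right_mono) auto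
      hence "C * r + eps * real ms * LamBar lam ms \<le> Phi * (r / d\<^sup>2 + r + 1)"
        using Phi_v by (simp add: algebra_simps)
      also have "\<dots> \<le> (2 + r / d\<^sup>2) * max 1 r * Phi" by (rule final_ineq[OF Phi0 r d])
      finally show "C * r + eps * real ms * LamBar lam ms \<le> (2 + r / d\<^sup>2) * max 1 r * Phi" .
    qed
    finally show "risk (mstar a lam eps) lam eps (tau eps) eta theta \<le> ennreal ((2 + r / d\<^sup>2) * max 1 r * Phistar a lam eps)"
      unfolding ms_def Phi_def .
  qed
qed


end
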